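(* Assume that $M\in\omega$ and $\mu:\mathcal P(2^{\omega})\to\omega\cup\{\infty\}$ is a monotone, subadditive function such that (i) $\mu(U)=\infty$ for each non-empty clopen $U\subseteq 2^{\omega}$; (ii) for each $a,b\subseteq 2^{\omega}$, if $\mu(a)\le M<\mu(b)$, then $\sup\{\mu(b\setminus U)+M: a\subseteq U,\ U \text{ clopen in } 2^{\omega}\}\ge \mu(b)$. Then $\mathbb H(\mu)$ is dense, shrinkable and $\mathbb G(\mu,M)$-large.
   Context: For $n\in\omega$ let $C_n=\{n\}\times 2^{\omega}$ and $C=\bigcup_{n<\omega}C_n$ (with the Euclidean topology). For $\mu:\mathcal P(2^\omega)\to\omega\cup\{\infty\}$ and $n\in\omega$ define $\mu^{(n)}:\mathcal P(C_n)\to\omega\cup\{\infty\}$ by $\mu^{(n)}(A)=\mu(\{x:\langle n,x\rangle\in A\})$. Let $\mathbb E$ be the set of functions $e$ with $\mathrm{dom}(e)$ an infinite subset of $\omega$ and $\emptyset\ne e(n)\subseteq C_n$ for each $n\in\mathrm{dom}(e)$; let $\mathbb O=\{o\in\mathbb E: o(n)$ is clopen in $C_n$ for each $n\in\mathrm{dom}(o)\}$. For $f,g\in\mathbb E$: $f\sqsubset g$ iff $\mathrm{dom}(f)\subseteq\mathrm{dom}(g)$ and $f(n)\subseteq g(n)$ for all $n\in\mathrm{dom}(f)$; $f\sqsubset^* g$ iff $\mathrm{dom}(f)\setminus\mathrm{dom}(g)$ is finite and $\{n\in\mathrm{dom}(f): f(n)\not\subseteq g(n)\}$ is finite; $f\perp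 g$ iff $\{n\in\mathrm{dom}(f)\cap\mathrm{dom}(g): f(n)\cap g(n)\ne\emptyset\}$ is finite. For $h\in\mathbb E$, $o\in\mathbb O$, the function $h\dotminus o$ has domain $\{n\in\mathrm{dom}(h): h(n)\not\subseteq o(n)\}$ (where $n\notin\mathrm{dom}(o)$ counts as $h(n)\not\subseteq o(n)$), with $(h\dotminus o)(n)=h(n)\setminus o(n)$ if $n\in\mathrm{dom}(o)$ and $=h(n)$ otherwise. $\mathbb G(\mu,M)=\{g\in\mathbb E:\mu^{(n)}(g(n))\le M$ for each $n\in\mathrm{dom}(g)\}$ and $\mathbb H(\mu)=\{h\in\mathbb E:\lim_{n\in\mathrm{dom}(h)}\mu^{(n)}(h(n))=\infty\}$. For $\mathbb G,\mathbb H\subseteq\mathbb E$: $\mathbb H$ is dense iff for each $o\in\mathbb O$ there is $h\in\mathbb H$ with $h\sqsubset o$; $\mathbb H$ is shrinkable iff for each $h\in\mathbb H$ and each countably infinite $\mathcal O\subseteq\mathbb O$ there is $h'\in\mathbb H$ with $h'\sqsubset h$ and, for all $o\in\mathcal O$, $h'\sqsubset^* o$ or $h'\perp o$; $\mathbb H$ is $\mathbb G$-large iff for each $g\in\mathbb G$ and each countably infinite $\mathcal H\subseteq\mathbb H$ there is $o\in\mathbb O$ with $g\sqsubset o$ and $h\dotminus o\in\mathbb H$ for every $h\in\mathcal H$. *)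

theory Defs
  imports "HOL-Analysis.Analysis" "HOL-Library.Extended_Nat"
begin

type_synonym cantor = "nat \<Rightarrow> bool"
type_synonym cpt = "nat \<times> cantor"
type_synonym efun = "nat \<Rightarrow> cpt set option"

definition cantor_top :: "cantor topology" where
  "cantor_top = product_topology (\<lambda>_. discrete_topology UNIV) UNIV"

definition C_top :: "cpt topology" where
  "C_top = prod_topology (discrete_topology UNIV) cantor_top"

definition Cn :: "nat \<Rightarrow> cpt set" where
  "Cn n = {n} \<times> UNIV"

definition clopen_in :: "'a topology \<Rightarrow> 'a set \<Rightarrow> bool" where
  "clopen_in T U \<longleftrightarrow> openin T U \<and> closedin T U"

definition mu_n :: "(cantor set \<Rightarrow> enat) \<Rightarrow> nat \<Rightarrow> cpt set \<Rightarrow> enat" where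
  "mu_n \<mu> n A = \<mu> {x. (n, x) \<in> A}"

definition Eset :: "efun set" where
  "Eset = {e. infinite (dom e) \<and> (\<forall>n\<in>dom e. the (e n) \<noteq> {} \<and> the (e n) \<subseteq> Cn n)}"

definition Oset :: "efun set" where
  "Oset = {u \<in> Eset. \<forall>n\<in>dom u. clopen_in (subtopology C_top (Cn n)) (the (u n))}"

definition sqsub :: "efun \<Rightarrow> efun \<Rightarrow> bool" where
  "sqsub f g \<longleftrightarrow> dom f \<subseteq> dom g \<and> (\<forall>n\<in>dom f. the (f n) \<subseteq> the (g n))"

definition sqsub_star :: "efun \<Rightarrow> efun \<Rightarrow> bool" where
  "sqsub_star f g \<longleftrightarrow> finite (dom f - dom g) \<and>
     finite {n \<in> dom f \<inter> dom g. \<not> the (f n) \<subseteq> the (g n)}"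

definition perp :: "efun \<Rightarrow> efun \<Rightarrow> bool" where
  "perp f g \<longleftrightarrow> finite {n \<in> dom f \<inter> dom g. the (f n) \<inter> the (g n) \<noteq> {}}"

definition dotminus :: "efun \<Rightarrow> efun \<Rightarrow> efun" where
  "dotminus h u = (\<lambda>n. if n \<in> dom h \<and> (n \<notin> dom u \<or> \<not> the (h n) \<subseteq> the (u n))
      then Some (if n \<in> dom u then the (h n) - the (u n) else the (h n)) else None)"

definition Gset :: "(cantor set \<Rightarrow> enat) \<Rightarrow> nat \<Rightarrow> efun set" where
  "Gset \<mu> M = {g \<in> Eset. \<forall>n\<in>dom g. mu_n \<mu> n (the (g n)) \<le> enat M}"

text \<open>lim over n in dom h of mu^(n)(h(n)) = infinity: for every finite bound K,
  only finitely many n in dom h have value at most K.\<close>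
definition Hset :: "(cantor set \<Rightarrow> enat) \<Rightarrow> efun set" where
  "Hset \<mu> = {h \<in> Eset. \<forall>K::nat. finite {n \<in> dom h. mu_n \<mu> n (the (h n)) \<le> enat K}}"

definition dense_fam :: "efun set \<Rightarrow> bool" where
  "dense_fam H \<longleftrightarrow> (\<forall>u\<in>Oset. \<exists>h\<in>H. sqsub h u)"

definition shrinkable :: "efun set \<Rightarrow> bool" where
  "shrinkable H \<longleftrightarrow> (\<forall>h\<in>H. \<forall>\<O>. \<O> \<subseteq> Oset \<and> countable \<O> \<and> infinite \<O> \<longrightarrow>
     (\<exists>h'\<in>H. sqsub h' h \<and> (\<forall>u\<in>\<O>. sqsub_star h' u \<or> perp h' u)))"

definition large :: "efun set \<Rightarrow> efun set \<Rightarrow> bool" where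
  "large G H \<longleftrightarrow> (\<forall>g\<in>G. \<forall>\<H>. \<H> \<subseteq> H \<and> countable \<H> \<and> infinite \<H> \<longrightarrow>
     (\<exists>u\<in>Oset. sqsub g u \<and> (\<forall>h\<in>\<H>. dotminus h u \<in> H)))"

end

theory Submission
  imports Defs
begin


lemma topspace_cantor[simp]: "topspace cantor_top = UNIV"
  by (simp add: cantor_top_def)

lemma clopen_lift:
  assumes "clopen_in cantor_top U"
  shows "clopen_in (subtopology C_top (Cn n)) ({n} \<times> U)"
proof -
  have o: "openin C_top ({n} \<times> U)" and c: "closedin C_top ({n} \<times> U)"
    using assms by (auto simp: C_top_def clopen_in_def openin_prod_Times_iff closedin_prod_Times_iff)
  have e: "{n} \<times> U = ({n} \<times> U) \<inter> Cn n" by (auto simp: Cn_def)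
  show ?thesis unfolding clopen_in_def openin_subtopology closedin_subtopology
    using o c e by blast
qed

lemma cont_emb: "continuous_map cantor_top C_top (\<lambda>x. (n, x))"
  unfolding C_top_def
  by (intro continuous_map_pairedI continuous_map_id continuous_map_const[THEN iffD2]) auto

lemma clopen_slice:
  assumes "clopen_in (subtopology C_top (Cn n)) S"
  shows "clopen_in cantor_top {x. (n, x) \<in> S}"
proof -
  obtain T1 where T1: "openin C_top T1" "S = T1 \<inter> Cn n"
    using assms by (auto simp: clopen_in_def openin_subtopology)
  obtain T2 where T2: "closedin C_top T2" "S = T2 \<inter> Cn n"
    using assms by (auto simp: clopen_in_def closedin_subtopology)
  have "openin cantor_top {x \<in> topspace cantor_top. (n, x) \<in> T1}"
    by (rule openin_continuous_map_preimage[OF cont_emb T1(1)])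
  moreover have "closedin cantor_top {x \<in> topspace cantor_top. (n, x) \<in> T2}"
    by (rule closedin_continuous_map_preimage[OF cont_emb T2(1)])
  moreover have "{x. (n, x) \<in> S} = {x \<in> topspace cantor_top. (n, x) \<in> T1}"
    "{x. (n, x) \<in> S} = {x \<in> topspace cantor_top. (n, x) \<in> T2}"
    using T1 T2 by (auto simp: Cn_def)
  ultimately show ?thesis by (simp add: clopen_in_def)
qed

lemma slice_ne: "S \<noteq> {} \<Longrightarrow> S \<subseteq> Cn n \<Longrightarrow> {x. (n, x) \<in> S} \<noteq> {}"
  by (auto simp: Cn_def)

lemma dense_part:
  assumes i: "\<And>U. U \<noteq> {} \<Longrightarrow> clopen_in cantor_top U \<Longrightarrow> \<mu> U = \<infinity>"
  shows "dense_fam (Hset \<mu>)"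
  unfolding dense_fam_def
proof
  fix u assume u: "u \<in> Oset"
  have E: "u \<in> Eset" using u by (simp add: Oset_def)
  have "\<forall>n\<in>dom u. mu_n \<mu> n (the (u n)) = \<infinity>"
  proof
    fix n assume n: "n \<in> dom u"
    have "clopen_in (subtopology C_top (Cn n)) (the (u n))" using u n by (simp add: Oset_def)
    then have "clopen_in cantor_top {x. (n, x) \<in> the (u n)}" by (rule clopen_slice)
    moreover have "{x. (n, x) \<in> the (u n)} \<noteq> {}" using E n by (intro slice_ne) (auto simp: Eset_def)
    ultimately show "mu_n \<mu> n (the (u n)) = \<infinity>" using i by (simp add: mu_n_def)
  qed
  then have em: "{n \<in> dom u. mu_n \<mu> n (the (u n)) \<le> enat K} = {}" for K by auto
  have "\<forall>K. finite {n \<in> dom u. mu_n \<mu> n (the (u n)) \<le> enat K}"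
    by (simp only: em finite.emptyI simp_thms)
  then have "u \<in> Hset \<mu>" using E by (simp add: Hset_def)
  moreover have "sqsub u u" by (simp add: sqsub_def)
  ultimately show "\<exists>h\<in>Hset \<mu>. sqsub h u" by blast
qed

definition Oi :: "efun \<Rightarrow> nat \<Rightarrow> cpt set" where
  "Oi u n = (if n \<in> dom u then the (u n) else {})"

definition goodp :: "(cantor set \<Rightarrow> enat) \<Rightarrow> cpt set \<Rightarrow> cpt set \<Rightarrow> nat \<Rightarrow> bool" where
  "goodp \<mu> F Q n \<longleftrightarrow> F \<inter> Q \<noteq> {} \<and> (F - Q = {} \<or> mu_n \<mu> n (F - Q) \<le> mu_n \<mu> n (F \<inter> Q))"

definition nxt :: "(cantor set \<Rightarrow> enat) \<Rightarrow> efun \<Rightarrow> nat set \<times> (nat \<Rightarrow> cpt set) \<Rightarrow> nat set \<times> (nat \<Rightarrow> cpt set)" where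
  "nxt \<mu> u Df = (let D = fst Df; f = snd Df; DA = {n\<in>D. goodp \<mu> (f n) (Oi u n) n} in
     if infinite DA then (DA, \<lambda>n. f n \<inter> Oi u n) else (D - DA, \<lambda>n. f n - Oi u n))"

lemma nxt_props:
  assumes mono: "\<And>A B. A \<subseteq> B \<Longrightarrow> \<mu> A \<le> \<mu> B"
    and subadd: "\<And>A B. \<mu> (A \<union> B) \<le> \<mu> A + \<mu> B"
    and inf: "infinite D" and ne: "\<forall>n\<in>D. f n \<noteq> {}"
    and eq: "nxt \<mu> u (D, f) = (D', f')"
  shows "infinite D' \<and> D' \<subseteq> D \<and> (\<forall>n\<in>D'. f' n \<noteq> {} \<and> f' n \<subseteq> f n \<and>
           mu_n \<mu> n (f n) \<le> mu_n \<mu> n (f' n) + mu_n \<mu> n (f' n)) \<and>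
         ((\<forall>n\<in>D'. f' n \<subseteq> Oi u n) \<or> (\<forall>n\<in>D'. f' n \<inter> Oi u n = {}))"
proof -
  define DA where "DA = {n\<in>D. goodp \<mu> (f n) (Oi u n) n}"
  have mm: "X \<subseteq> Y \<Longrightarrow> mu_n \<mu> n X \<le> mu_n \<mu> n Y" for X Y n
    unfolding mu_n_def by (rule mono) auto
  have sa: "mu_n \<mu> n (X \<union> Y) \<le> mu_n \<mu> n X + mu_n \<mu> n Y" for X Y n
  proof -
    have eq: "{x. (n, x) \<in> X \<union> Y} = {x. (n, x) \<in> X} \<union> {x. (n, x) \<in> Y}" by auto
    show ?thesis unfolding mu_n_def eq by (rule subadd)
  qed
  have split: "mu_n \<mu> n (f n) \<le> mu_n \<mu> n (f n \<inter> Oi u n) + mu_n \<mu> n (f n - Oi u n)" for n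
  proof -
    have "f n = (f n \<inter> Oi u n) \<union> (f n - Oi u n)" by blast
    then show ?thesis using sa[where X="f n \<inter> Oi u n" and Y="f n - Oi u n" and n=n] by simp
  qed
  show ?thesis
  proof (cases "infinite DA")
    case True
    then have D': "D' = DA" and f': "f' = (\<lambda>n. f n \<inter> Oi u n)"
      using eq by (simp_all add: nxt_def DA_def Let_def)
    have "mu_n \<mu> n (f n) \<le> mu_n \<mu> n (f' n) + mu_n \<mu> n (f' n)" if n: "n \<in> DA" for n
    proof -
      have g: "goodp \<mu> (f n) (Oi u n) n" using n by (simp add: DA_def)
      have "mu_n \<mu> n (f n - Oi u n) \<le> mu_n \<mu> n (f n \<inter> Oi u n)"
      proof (cases "f n - Oi u n = {}")
        case True
        show ?thesis unfolding True by (rule mm) simp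
      next
        case False
        then show ?thesis using g by (simp add: goodp_def)
      qed
      then have "mu_n \<mu> n (f n \<inter> Oi u n) + mu_n \<mu> n (f n - Oi u n) \<le> mu_n \<mu> n (f n \<inter> Oi u n) + mu_n \<mu> n (f n \<inter> Oi u n)"
        by (rule add_left_mono)
      with split[of n] have "mu_n \<mu> n (f n) \<le> mu_n \<mu> n (f n \<inter> Oi u n) + mu_n \<mu> n (f n \<inter> Oi u n)"
        by (rule order_trans)
      then show ?thesis using f' by simp
    qed
    moreover have "\<forall>n\<in>DA. f' n \<noteq> {}" using f' by (auto simp: DA_def goodp_def)
    ultimately show ?thesis using True D' f' by (auto simp: DA_def)
  next
    case False
    then have D': "D' = D - DA" and f': "f' = (\<lambda>n. f n - Oi u n)"
      using eq by (simp_all add: nxt_def DA_def Let_def)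
    have "mu_n \<mu> n (f n) \<le> mu_n \<mu> n (f' n) + mu_n \<mu> n (f' n) \<and> f' n \<noteq> {}" if n: "n \<in> D - DA" for n
    proof -
      have g: "\<not> goodp \<mu> (f n) (Oi u n) n" using n by (simp add: DA_def)
      have ne': "f' n \<noteq> {}" using g ne n f' by (auto simp: goodp_def)
      have "mu_n \<mu> n (f n \<inter> Oi u n) \<le> mu_n \<mu> n (f n - Oi u n)"
      proof (cases "f n \<inter> Oi u n = {}")
        case True
        show ?thesis unfolding True by (rule mm) simp
      next
        case False
        then show ?thesis using g ne' f' by (auto simp: goodp_def)
      qed
      then have "mu_n \<mu> n (f n \<inter> Oi u n) + mu_n \<mu> n (f n - Oi u n) \<le> mu_n \<mu> n (f n - Oi u n) + mu_n \<mu> n (f n - Oi u n)"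
        by (rule add_right_mono)
      with split[of n] have "mu_n \<mu> n (f n) \<le> mu_n \<mu> n (f n - Oi u n) + mu_n \<mu> n (f n - Oi u n)"
        by (rule order_trans)
      then show ?thesis using f' ne' by simp
    qed
    moreover have "infinite (D - DA)" using False inf by simp
    ultimately show ?thesis using D' f' by auto
  qed
qed



primrec st :: "(cantor set \<Rightarrow> enat) \<Rightarrow> efun \<Rightarrow> (nat \<Rightarrow> efun) \<Rightarrow> nat \<Rightarrow> nat set \<times> (nat \<Rightarrow> cpt set)" where
  "st \<mu> h os 0 = (dom h, \<lambda>n. the (h n))"
| "st \<mu> h os (Suc i) = nxt \<mu> (os i) (st \<mu> h os i)"

lemma enat_pow_step: fixes x c a :: enat shows "a \<le> 2^i * x \<Longrightarrow> x \<le> c + c \<Longrightarrow> a \<le> 2^(Suc i) * c"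
proof -
  assume 1: "a \<le> 2^i * x" and 2: "x \<le> c + c"
  have "2^i * x \<le> 2^i * (c + c)" using 2 by (simp add: mult_left_mono)
  also have "\<dots> = 2^(Suc i) * c" by (simp only: power_Suc mult_2 distrib_left distrib_right)
  finally show ?thesis using 1 by simp
qed

lemma st_inv:
  assumes mono: "\<And>A B. A \<subseteq> B \<Longrightarrow> \<mu> A \<le> \<mu> B"
    and subadd: "\<And>A B. \<mu> (A \<union> B) \<le> \<mu> A + \<mu> B"
    and h: "h \<in> Eset"
  shows "infinite (fst (st \<mu> h os i)) \<and> fst (st \<mu> h os i) \<subseteq> dom h \<and>
    (\<forall>n\<in>fst (st \<mu> h os i). snd (st \<mu> h os i) n \<noteq> {} \<and> snd (st \<mu> h os i) n \<subseteq> the (h n) \<and>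
       mu_n \<mu> n (the (h n)) \<le> 2^i * mu_n \<mu> n (snd (st \<mu> h os i) n))"
proof (induction i)
  case 0
  then show ?case using h by (auto simp: Eset_def)
next
  case (Suc i)
  obtain D f where Df: "st \<mu> h os i = (D, f)" by (cases "st \<mu> h os i")
  obtain D' f' where Df': "nxt \<mu> (os i) (D, f) = (D', f')" by (cases "nxt \<mu> (os i) (D, f)")
  have IH: "infinite D" "D \<subseteq> dom h" "\<forall>n\<in>D. f n \<noteq> {} \<and> f n \<subseteq> the (h n) \<and>
       mu_n \<mu> n (the (h n)) \<le> 2^i * mu_n \<mu> n (f n)" using Suc Df by auto
  have N: "infinite D' \<and> D' \<subseteq> D \<and> (\<forall>n\<in>D'. f' n \<noteq> {} \<and> f' n \<subseteq> f n \<and>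
           mu_n \<mu> n (f n) \<le> mu_n \<mu> n (f' n) + mu_n \<mu> n (f' n))"
    using nxt_props[where \<mu>=\<mu>, OF mono subadd IH(1) _ Df'] IH(3) by blast
  have S: "st \<mu> h os (Suc i) = (D', f')" using Df Df' by simp
  show ?case unfolding S fst_conv snd_conv
  proof (intro conjI ballI)
    show "infinite D'" using N by blast
  next
    show "D' \<subseteq> dom h" using N IH by blast
  next
    fix n assume n: "n \<in> D'"
    show "f' n \<noteq> {}" using N n by blast
  next
    fix n assume n: "n \<in> D'"
    then have nD: "n \<in> D" using N by blast
    show "f' n \<subseteq> the (h n)" using N n IH(3) nD by blast
  next
    fix n assume n: "n \<in> D'"
    then have nD: "n \<in> D" using N by blast
    have a: "mu_n \<mu> n (the (h n)) \<le> 2^i * mu_n \<mu> n (f n)" using IH(3) nD by blast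
    have b: "mu_n \<mu> n (f n) \<le> mu_n \<mu> n (f' n) + mu_n \<mu> n (f' n)" using N n by blast
    show "mu_n \<mu> n (the (h n)) \<le> 2^Suc i * mu_n \<mu> n (f' n)" by (rule enat_pow_step[OF a b])
  qed
qed

lemma st_mono:
  assumes mono: "\<And>A B. A \<subseteq> B \<Longrightarrow> \<mu> A \<le> \<mu> B"
    and subadd: "\<And>A B. \<mu> (A \<union> B) \<le> \<mu> A + \<mu> B"
    and h: "h \<in> Eset" and ik: "i \<le> k"
  shows "fst (st \<mu> h os k) \<subseteq> fst (st \<mu> h os i) \<and>
    (\<forall>n\<in>fst (st \<mu> h os k). snd (st \<mu> h os k) n \<subseteq> snd (st \<mu> h os i) n)"
  using ik
proof (induction k rule: dec_induct)
  case base
  then show ?case by simp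
next
  case (step k)
  obtain D f where Df: "st \<mu> h os k = (D, f)" by (cases "st \<mu> h os k")
  obtain D' f' where Df': "nxt \<mu> (os k) (D, f) = (D', f')" by (cases "nxt \<mu> (os k) (D, f)")
  have I: "infinite D" "\<forall>n\<in>D. f n \<noteq> {}" using st_inv[where \<mu>=\<mu> and os=os and i=k, OF mono subadd h] Df by auto
  have N: "D' \<subseteq> D \<and> (\<forall>n\<in>D'. f' n \<subseteq> f n)"
    using nxt_props[where \<mu>=\<mu>, OF mono subadd I Df'] by blast
  have S: "st \<mu> h os (Suc k) = (D', f')" using Df Df' by simp
  have "D \<subseteq> fst (st \<mu> h os i)" "\<forall>n\<in>D. f n \<subseteq> snd (st \<mu> h os i) n" using step.IH Df by auto
  then show ?case unfolding S fst_conv snd_conv using N by blast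
qed

lemma st_side:
  assumes mono: "\<And>A B. A \<subseteq> B \<Longrightarrow> \<mu> A \<le> \<mu> B"
    and subadd: "\<And>A B. \<mu> (A \<union> B) \<le> \<mu> A + \<mu> B"
    and h: "h \<in> Eset"
  shows "(\<forall>n\<in>fst (st \<mu> h os (Suc i)). snd (st \<mu> h os (Suc i)) n \<subseteq> Oi (os i) n) \<or>
         (\<forall>n\<in>fst (st \<mu> h os (Suc i)). snd (st \<mu> h os (Suc i)) n \<inter> Oi (os i) n = {})"
proof -
  obtain D f where Df: "st \<mu> h os i = (D, f)" by (cases "st \<mu> h os i")
  obtain D' f' where Df': "nxt \<mu> (os i) (D, f) = (D', f')" by (cases "nxt \<mu> (os i) (D, f)")
  have I: "infinite D" "\<forall>n\<in>D. f n \<noteq> {}" using st_inv[where \<mu>=\<mu> and os=os and i=i, OF mono subadd h] Df by auto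
  have S: "st \<mu> h os (Suc i) = (D', f')" using Df Df' by simp
  show ?thesis unfolding S fst_conv snd_conv using nxt_props[where \<mu>=\<mu>, OF mono subadd I Df'] by blast
qed

primrec pick :: "(nat \<Rightarrow> nat \<Rightarrow> bool) \<Rightarrow> nat \<Rightarrow> nat" where
  "pick P 0 = (SOME n. P 0 n)"
| "pick P (Suc k) = (SOME n. P (Suc k) n \<and> pick P k < n)"

lemma pick_props:
  assumes ex: "\<And>k m. \<exists>n. P k n \<and> m < n"
  shows "P k (pick P k)" and "strict_mono (pick P)"
proof -
  have A: "P (Suc k) (pick P (Suc k)) \<and> pick P k < pick P (Suc k)" for k
  proof -
    have "\<exists>n. P (Suc k) n \<and> pick P k < n" by (rule ex)
    then have "P (Suc k) (SOME n. P (Suc k) n \<and> pick P k < n) \<and> pick P k < (SOME n. P (Suc k) n \<and> pick P k < n)"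
      by (rule someI_ex)
    then show ?thesis by (simp only: pick.simps)
  qed
  have B: "P 0 (pick P 0)"
  proof -
    have "\<exists>n. P 0 n" using ex[of 0 0] by blast
    then have "P 0 (SOME n. P 0 n)" by (rule someI_ex)
    then show ?thesis by (simp only: pick.simps)
  qed
  show "P k (pick P k)"
  proof (cases k)
    case 0
    then show ?thesis using B by simp
  next
    case (Suc k')
    then show ?thesis using A[of k'] by simp
  qed
  show "strict_mono (pick P)" unfolding strict_mono_Suc_iff using A by blast
qed

lemma enat_pow_nat: "(2::enat)^j * enat k = enat (2^j * k)"
  by (induction j) (simp_all add: mult.assoc numeral_eq_enat)



lemma shrink_part:
  assumes mono: "\<And>A B. A \<subseteq> B \<Longrightarrow> \<mu> A \<le> \<mu> B"
    and subadd: "\<And>A B. \<mu> (A \<union> B) \<le> \<mu> A + \<mu> B"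
  shows "shrinkable (Hset \<mu>)"
  unfolding shrinkable_def
proof (intro ballI allI impI)
  fix h and Ow :: "efun set"
  assume hH: "h \<in> Hset \<mu>" and Ow: "Ow \<subseteq> Oset \<and> countable Ow \<and> infinite Ow"
  have hE: "h \<in> Eset" and hfin: "\<And>K. finite {n \<in> dom h. mu_n \<mu> n (the (h n)) \<le> enat K}"
    using hH by (auto simp: Hset_def)
  define os where "os = from_nat_into Ow"
  have Owne: "Ow \<noteq> {}" using Ow by auto
  have osr: "range os = Ow" using Ow Owne by (simp add: os_def)
  define D where "D k = fst (st \<mu> h os k)" for k
  define F where "F k = snd (st \<mu> h os k)" for k
  have inv: "infinite (D k) \<and> D k \<subseteq> dom h \<and> (\<forall>n\<in>D k. F k n \<noteq> {} \<and> F k n \<subseteq> the (h n) \<and>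
       mu_n \<mu> n (the (h n)) \<le> 2^k * mu_n \<mu> n (F k n))" for k
    unfolding D_def F_def by (rule st_inv[where \<mu>=\<mu>, OF mono subadd hE])
  have mon: "i \<le> k \<Longrightarrow> D k \<subseteq> D i \<and> (\<forall>n\<in>D k. F k n \<subseteq> F i n)" for i k
    unfolding D_def F_def by (rule st_mono[where \<mu>=\<mu>, OF mono subadd hE])
  have side: "(\<forall>n\<in>D (Suc i). F (Suc i) n \<subseteq> Oi (os i) n) \<or> (\<forall>n\<in>D (Suc i). F (Suc i) n \<inter> Oi (os i) n = {})" for i
    unfolding D_def F_def by (rule st_side[where \<mu>=\<mu>, OF mono subadd hE])
  define P where "P k n \<longleftrightarrow> n \<in> D (Suc k) \<and> (2::enat)^Suc k * enat k < mu_n \<mu> n (the (h n))" for k n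
  have ex: "\<exists>n. P k n \<and> m < n" for k m
  proof -
    let ?B = "{n \<in> dom h. mu_n \<mu> n (the (h n)) \<le> enat (2^Suc k * k)} \<union> {..m}"
    have "finite ?B" using hfin by simp
    then have "infinite (D (Suc k) - ?B)" using inv[of "Suc k"] by (simp add: Diff_infinite_finite)
    then have "D (Suc k) - ?B \<noteq> {}" by (metis finite.emptyI)
    then obtain n where n: "n \<in> D (Suc k) - ?B" by blast
    then have "n \<in> dom h" using inv[of "Suc k"] by blast
    then have "\<not> mu_n \<mu> n (the (h n)) \<le> enat (2^Suc k * k)" using n by blast
    then have "(2::enat)^Suc k * enat k < mu_n \<mu> n (the (h n))"
      by (subst enat_pow_nat) (meson not_le)
    then have "P k n" using n by (simp add: P_def)
    then show ?thesis using n by auto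
  qed
  define nk where "nk = pick P"
  have Pk: "P k (nk k)" for k using pick_props(1)[OF ex] by (simp add: nk_def)
  have smk: "strict_mono nk" using pick_props(2)[OF ex] by (simp add: nk_def)
  have injk: "inj nk" using smk by (simp add: strict_mono_imp_inj_on)
  define h' where "h' n = (if n \<in> range nk then Some (F (Suc (inv nk n)) n) else None)" for n
  have domh': "dom h' = range nk" by (auto simp: h'_def dom_def)
  have h'k: "the (h' (nk k)) = F (Suc k) (nk k)" for k by (simp add: h'_def injk)
  have kD: "nk k \<in> D (Suc k)" for k using Pk by (simp add: P_def)
  have kprops: "F (Suc k) (nk k) \<noteq> {} \<and> F (Suc k) (nk k) \<subseteq> the (h (nk k)) \<and> nk k \<in> dom h \<and>
      mu_n \<mu> (nk k) (the (h (nk k))) \<le> 2^Suc k * mu_n \<mu> (nk k) (F (Suc k) (nk k))" for k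
    using inv[of "Suc k"] kD[of k] by blast
  have hsub: "the (h n) \<subseteq> Cn n" if "n \<in> dom h" for n using hE that by (auto simp: Eset_def)
  have h'E: "h' \<in> Eset"
    unfolding Eset_def
  proof (intro CollectI conjI ballI)
    show "infinite (dom h')" using domh' injk by (simp add: range_inj_infinite)
  next
    fix n assume "n \<in> dom h'"
    then obtain k where k: "n = nk k" using domh' by auto
    show "the (h' n) \<noteq> {}" using kprops[of k] k h'k by simp
    show "the (h' n) \<subseteq> Cn n" using kprops[of k] k h'k hsub[of n] by auto
  qed
  have h'fin: "finite {n \<in> dom h'. mu_n \<mu> n (the (h' n)) \<le> enat K}" for K
  proof -
    have "{n \<in> dom h'. mu_n \<mu> n (the (h' n)) \<le> enat K} \<subseteq> nk ` {..K}"
    proof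
      fix n assume n: "n \<in> {n \<in> dom h'. mu_n \<mu> n (the (h' n)) \<le> enat K}"
      then obtain k where k: "n = nk k" using domh' by auto
      have le: "mu_n \<mu> n (F (Suc k) n) \<le> enat K" using n k h'k by simp
      have "k \<le> K"
      proof (rule ccontr)
        assume "\<not> k \<le> K"
        then have "enat K \<le> enat k" by simp
        have "(2::enat)^Suc k * enat k < mu_n \<mu> n (the (h n))" using Pk[of k] k by (simp add: P_def)
        also have "\<dots> \<le> 2^Suc k * mu_n \<mu> n (F (Suc k) n)" using kprops[of k] k by simp
        also have "\<dots> \<le> 2^Suc k * enat K" using le by (intro mult_left_mono) auto
        also have "\<dots> \<le> 2^Suc k * enat k" using \<open>enat K \<le> enat k\<close> by (intro mult_left_mono) auto
        finally show False by simp
      qed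
      then show "n \<in> nk ` {..K}" using k by auto
    qed
    then show ?thesis by (rule finite_subset) simp
  qed
  have h'H: "h' \<in> Hset \<mu>" using h'E h'fin by (simp add: Hset_def)
  have sq: "sqsub h' h"
    unfolding sqsub_def
  proof (intro conjI ballI)
    show "dom h' \<subseteq> dom h" using domh' kprops by auto
  next
    fix n assume "n \<in> dom h'"
    then obtain k where k: "n = nk k" using domh' by auto
    show "the (h' n) \<subseteq> the (h n)" using kprops[of k] k h'k by simp
  qed
  have late: "i \<le> k \<Longrightarrow> F (Suc k) (nk k) \<subseteq> F (Suc i) (nk k) \<and> nk k \<in> D (Suc i)" for i k
    using mon[of "Suc i" "Suc k"] kD[of k] by auto
  have cover: "{n \<in> dom h'. Q n} \<subseteq> nk ` {..<i}" if "\<And>k. i \<le> k \<Longrightarrow> \<not> Q (nk k)" for Q i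
  proof
    fix n assume n: "n \<in> {n \<in> dom h'. Q n}"
    then obtain k where k: "n = nk k" using domh' by auto
    have "\<not> i \<le> k" using that n k by blast
    then show "n \<in> nk ` {..<i}" using k by auto
  qed
  have "sqsub_star h' u \<or> perp h' u" if u: "u \<in> Ow" for u
  proof -
    obtain i where i: "u = os i" using u osr by auto
    from side[of i] show ?thesis
    proof
      assume A: "\<forall>n\<in>D (Suc i). F (Suc i) n \<subseteq> Oi (os i) n"
      have good: "nk k \<in> dom u \<and> the (h' (nk k)) \<subseteq> the (u (nk k))" if "i \<le> k" for k
      proof -
        have l: "nk k \<in> D (Suc i)" "F (Suc k) (nk k) \<subseteq> F (Suc i) (nk k)" using late[OF that] by auto
        have "F (Suc i) (nk k) \<subseteq> Oi (os i) (nk k)" using A l(1) by blast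
        then have s: "the (h' (nk k)) \<subseteq> Oi u (nk k)" unfolding h'k i using l(2) by (rule subset_trans[rotated])
        have "the (h' (nk k)) \<noteq> {}" using kprops[of k] h'k by simp
        then have "nk k \<in> dom u" using s by (auto simp: Oi_def split: if_splits)
        then show ?thesis using s by (simp add: Oi_def)
      qed
      have "{n \<in> dom h'. n \<notin> dom u} \<subseteq> nk ` {..<i}"
        by (rule cover) (use good in blast)
      moreover have "dom h' - dom u = {n \<in> dom h'. n \<notin> dom u}" by blast
      ultimately have c1: "dom h' - dom u \<subseteq> nk ` {..<i}" by simp
      have "{n \<in> dom h'. n \<in> dom u \<and> \<not> the (h' n) \<subseteq> the (u n)} \<subseteq> nk ` {..<i}"
        by (rule cover) (use good in blast)
      moreover have "{n \<in> dom h' \<inter> dom u. \<not> the (h' n) \<subseteq> the (u n)} = {n \<in> dom h'. n \<in> dom u \<and> \<not> the (h' n) \<subseteq> the (u n)}" by blast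
      ultimately have "{n \<in> dom h' \<inter> dom u. \<not> the (h' n) \<subseteq> the (u n)} \<subseteq> nk ` {..<i}" by simp
      moreover have fin: "finite (nk ` {..<i})" by simp
      ultimately have "sqsub_star h' u" unfolding sqsub_star_def using c1 finite_subset by blast
      then show ?thesis by simp
    next
      assume A: "\<forall>n\<in>D (Suc i). F (Suc i) n \<inter> Oi (os i) n = {}"
      have good: "nk k \<in> dom u \<Longrightarrow> the (h' (nk k)) \<inter> the (u (nk k)) = {}" if "i \<le> k" for k
      proof -
        assume "nk k \<in> dom u"
        moreover have "the (h' (nk k)) \<inter> Oi u (nk k) = {}"
        proof -
          have l: "nk k \<in> D (Suc i)" "F (Suc k) (nk k) \<subseteq> F (Suc i) (nk k)" using late[OF that] by auto
          have "F (Suc i) (nk k) \<inter> Oi (os i) (nk k) = {}" using A l(1) by blast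
          then show ?thesis unfolding h'k i using l(2) by blast
        qed
        ultimately show ?thesis by (simp add: Oi_def)
      qed
      have "{n \<in> dom h'. n \<in> dom u \<and> the (h' n) \<inter> the (u n) \<noteq> {}} \<subseteq> nk ` {..<i}"
        by (rule cover) (use good in blast)
      moreover have "{n \<in> dom h' \<inter> dom u. the (h' n) \<inter> the (u n) \<noteq> {}} = {n \<in> dom h'. n \<in> dom u \<and> the (h' n) \<inter> the (u n) \<noteq> {}}" by blast
      ultimately have "{n \<in> dom h' \<inter> dom u. the (h' n) \<inter> the (u n) \<noteq> {}} \<subseteq> nk ` {..<i}" by simp
      moreover have fin: "finite (nk ` {..<i})" by simp
      ultimately have "perp h' u" unfolding perp_def using finite_subset by blast
      then show ?thesis by simp
    qed
  qed
  then show "\<exists>h'\<in>Hset \<mu>. sqsub h' h \<and> (\<forall>u\<in>Ow. sqsub_star h' u \<or> perp h' u)"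
    using h'H sq by blast
qed



lemma clopen_UNIV: "clopen_in cantor_top UNIV"
  by (metis clopen_in_def closedin_topspace openin_topspace topspace_cantor)

lemma sup_lemma:
  assumes mono: "\<And>A B. A \<subseteq> B \<Longrightarrow> \<mu> A \<le> \<mu> B"
    and ii: "\<And>a b. \<mu> a \<le> enat M \<Longrightarrow> enat M < \<mu> b \<Longrightarrow>
       (SUP U\<in>{U. a \<subseteq> U \<and> clopen_in cantor_top U}. \<mu> (b - U) + enat M) \<ge> \<mu> b"
    and a: "\<mu> a \<le> enat M" and t: "t \<le> \<mu> b" "t \<noteq> \<infinity>"
  shows "\<exists>U. clopen_in cantor_top U \<and> a \<subseteq> U \<and> t \<le> \<mu> (b - U) + enat M"
proof (cases "\<mu> b \<le> enat M")
  case True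
  then have "t \<le> \<mu> (b - UNIV) + enat M" using t
    by (metis add.commute add_increasing order_trans zero_le)
  then show ?thesis using clopen_UNIV by blast
next
  case False
  obtain t' where t': "t = enat t'" using t by (cases t) auto
  show ?thesis
  proof (cases "t' = 0")
    case True
    then show ?thesis using clopen_UNIV t' by (auto simp: zero_enat_def[symmetric])
  next
    case t0: False
    show ?thesis
    proof (rule ccontr)
      assume "\<not> ?thesis"
      then have lt: "\<mu> (b - U) + enat M \<le> enat (t' - 1)" if "U \<in> {U. a \<subseteq> U \<and> clopen_in cantor_top U}" for U
        using that t' t0 by (cases "\<mu> (b - U) + enat M") auto
      have "\<mu> b \<le> (SUP U\<in>{U. a \<subseteq> U \<and> clopen_in cantor_top U}. \<mu> (b - U) + enat M)"
        using ii[OF a] False by (simp add: not_le)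
      also have "\<dots> \<le> enat (t' - 1)" by (rule SUP_least) (rule lt)
      finally have "\<mu> b \<le> enat (t' - 1)" .
      then have "enat t' \<le> enat (t' - 1)" using t t' by (metis order_trans)
      then show False using t0 by simp
    qed
  qed
qed

lemma dom_dotminus: "n \<in> dom (dotminus h u) \<longleftrightarrow> n \<in> dom h \<and> (n \<notin> dom u \<or> \<not> the (h n) \<subseteq> the (u n))"
  by (simp add: dotminus_def dom_def)

lemma the_dotminus: "n \<in> dom (dotminus h u) \<Longrightarrow>
   the (dotminus h u n) = (if n \<in> dom u then the (h n) - the (u n) else the (h n))"
proof -
  assume "n \<in> dom (dotminus h u)"
  then have "n \<in> dom h \<and> (n \<notin> dom u \<or> \<not> the (h n) \<subseteq> the (u n))" by (simp add: dom_dotminus)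
  then show ?thesis by (simp add: dotminus_def)
qed



lemma large_part:
  assumes mono: "\<And>A B. A \<subseteq> B \<Longrightarrow> \<mu> A \<le> \<mu> B"
    and ii: "\<And>a b. \<mu> a \<le> enat M \<Longrightarrow> enat M < \<mu> b \<Longrightarrow>
       (SUP U\<in>{U. a \<subseteq> U \<and> clopen_in cantor_top U}. \<mu> (b - U) + enat M) \<ge> \<mu> b"
  shows "large (Gset \<mu> M) (Hset \<mu>)"
  unfolding large_def
proof (intro ballI allI impI)
  fix g and HH :: "efun set"
  assume g: "g \<in> Gset \<mu> M" and HH: "HH \<subseteq> Hset \<mu> \<and> countable HH \<and> infinite HH"
  have gE: "g \<in> Eset" and gM: "\<forall>n\<in>dom g. mu_n \<mu> n (the (g n)) \<le> enat M"
    using g by (auto simp: Gset_def)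
  define hs where "hs = from_nat_into HH"
  have HHne: "HH \<noteq> {}" using HH by auto
  have hsr: "range hs = HH" using HH HHne by (simp add: hs_def)
  define a where "a n = {x. (n, x) \<in> the (g n)}" for n
  define b where "b n j = (if n \<in> dom (hs j) then {x. (n, x) \<in> the (hs j n)} else {})" for n j
  define t where "t n j = min (\<mu> (b n j)) (enat n)" for n j
  define V where "V n j = (SOME U. clopen_in cantor_top U \<and> a n \<subseteq> U \<and> t n j \<le> \<mu> (b n j - U) + enat M)" for n j
  have aM: "\<mu> (a n) \<le> enat M" if "n \<in> dom g" for n using gM that by (simp add: a_def mu_n_def)
  have Vp: "clopen_in cantor_top (V n j) \<and> a n \<subseteq> V n j \<and> t n j \<le> \<mu> (b n j - V n j) + enat M"
    if "n \<in> dom g" for n j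
  proof -
    have t1: "t n j \<le> \<mu> (b n j)" by (simp add: t_def)
    have t2: "t n j \<noteq> \<infinity>" by (cases "\<mu> (b n j)") (auto simp: t_def min_def)
    have "\<exists>U. clopen_in cantor_top U \<and> a n \<subseteq> U \<and> t n j \<le> \<mu> (b n j - U) + enat M"
      by (rule sup_lemma[where \<mu>=\<mu>, OF mono ii aM[OF that] t1 t2])
    then show ?thesis unfolding V_def by (rule someI_ex)
  qed
  define W where "W n = (\<Inter>j\<in>{..n}. V n j)" for n
  have Wp: "clopen_in cantor_top (W n) \<and> a n \<subseteq> W n \<and> (\<forall>j\<le>n. W n \<subseteq> V n j)" if n: "n \<in> dom g" for n
  proof -
    have "openin cantor_top (W n)" unfolding W_def
      by (rule openin_INT2) (use Vp[OF n] in \<open>auto simp: clopen_in_def\<close>)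
    moreover have "closedin cantor_top (W n)" unfolding W_def
      by (rule closedin_INT) (use Vp[OF n] in \<open>auto simp: clopen_in_def\<close>)
    moreover have "a n \<subseteq> W n" unfolding W_def using Vp[OF n] by auto
    moreover have "\<forall>j\<le>n. W n \<subseteq> V n j" unfolding W_def by auto
    ultimately show ?thesis by (simp add: clopen_in_def)
  qed
  define u where "u n = (if n \<in> dom g then Some ({n} \<times> W n) else None)" for n
  have domu: "dom u = dom g" by (auto simp: u_def dom_def)
  have theu: "the (u n) = {n} \<times> W n" if "n \<in> dom g" for n using that by (simp add: u_def)
  have aNe: "a n \<noteq> {}" if "n \<in> dom g" for n
    unfolding a_def by (rule slice_ne) (use gE that in \<open>auto simp: Eset_def\<close>)
  have infg: "infinite (dom g)" using gE by (simp add: Eset_def)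
  have uO: "u \<in> Oset"
    unfolding Oset_def Eset_def
  proof (intro CollectI conjI ballI)
    show "infinite (dom u)" using domu infg by simp
  next
    fix n assume "n \<in> dom u"
    then have n: "n \<in> dom g" using domu by simp
    show "the (u n) \<noteq> {}" using theu[OF n] Wp[OF n] aNe[OF n] by auto
    show "the (u n) \<subseteq> Cn n" using theu[OF n] by (auto simp: Cn_def)
    show "clopen_in (subtopology C_top (Cn n)) (the (u n))"
      unfolding theu[OF n] by (rule clopen_lift) (use Wp[OF n] in blast)
  qed
  have sq: "sqsub g u"
    unfolding sqsub_def
  proof (intro conjI ballI)
    show "dom g \<subseteq> dom u" using domu by simp
  next
    fix n assume n: "n \<in> dom g"
    show "the (g n) \<subseteq> the (u n)"
    proof
      fix p assume p: "p \<in> the (g n)"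
      then have "p \<in> Cn n" using gE n by (auto simp: Eset_def)
      then obtain x where x: "p = (n, x)" by (auto simp: Cn_def)
      then have "x \<in> a n" using p by (simp add: a_def)
      then have "x \<in> W n" using Wp[OF n] by blast
      then show "p \<in> the (u n)" using theu[OF n] x by simp
    qed
  qed
  have mu0: "\<mu> {} \<le> enat M"
  proof -
    obtain n where n: "n \<in> dom g" using infg by (metis finite.emptyI equals0I)
    have "\<mu> {} \<le> \<mu> (a n)" by (rule mono) simp
    then show ?thesis using aM[OF n] by (rule order_trans)
  qed
  have "dotminus h u \<in> Hset \<mu>" if hin: "h \<in> HH" for h
  proof -
    obtain j where j: "h = hs j" using hin hsr by auto
    have hH: "h \<in> Hset \<mu>" using hin HH by blast
    have hE: "h \<in> Eset" and hfin: "\<And>K. finite {n \<in> dom h. mu_n \<mu> n (the (h n)) \<le> enat K}"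
      using hH by (auto simp: Hset_def)
    define sl where "sl n = {x. (n, x) \<in> the (h n)}" for n
    have bsl: "b n j = sl n" if "n \<in> dom h" for n using that j by (simp add: b_def sl_def)
    have key: "min (\<mu> (sl n)) (enat n) \<le> \<mu> (sl n - W n) + enat M"
      if n: "n \<in> dom h" "n \<in> dom g" "j \<le> n" for n
    proof -
      have "t n j \<le> \<mu> (b n j - V n j) + enat M" using Vp[OF n(2)] by blast
      also have "\<dots> \<le> \<mu> (b n j - W n) + enat M"
      proof -
        have "W n \<subseteq> V n j" using Wp[OF n(2)] n(3) by blast
        then have "\<mu> (b n j - V n j) \<le> \<mu> (b n j - W n)" by (intro mono) blast
        then show ?thesis by (rule add_right_mono)
      qed
      finally show ?thesis using bsl[OF n(1)] by (simp add: t_def)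
    qed
    define Ex where "Ex K = {n \<in> dom h. \<mu> (sl n) \<le> enat (K + M)} \<union> {..K + M} \<union> {..j}" for K
    have finEx: "finite (Ex K)" for K
      using hfin[of "K + M"] by (simp add: Ex_def sl_def mu_n_def)
    have big: "enat K < \<mu> (sl n) \<and> (n \<in> dom g \<longrightarrow> enat K < \<mu> (sl n - W n))"
      if n: "n \<in> dom h" "n \<notin> Ex K" for n K
    proof -
      have s1: "enat (K + M) < \<mu> (sl n)" and s2: "K + M < n" and s3: "j \<le> n"
        using n by (auto simp: Ex_def not_le)
      have "enat K < \<mu> (sl n)" using s1 by (metis le_add1 enat_ord_simps(1) order_le_less_trans)
      moreover have "enat K < \<mu> (sl n - W n)" if g: "n \<in> dom g"
      proof (rule ccontr)
        assume "\<not> enat K < \<mu> (sl n - W n)"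
        then have le: "\<mu> (sl n - W n) \<le> enat K" by (simp add: not_less)
        have "enat (K + M) < min (\<mu> (sl n)) (enat n)" using s1 s2 by simp
        also have "\<dots> \<le> \<mu> (sl n - W n) + enat M" by (rule key[OF n(1) g s3])
        also have "\<dots> \<le> enat K + enat M" using le by (rule add_right_mono)
        finally show False by simp
      qed
      ultimately show ?thesis by blast
    qed
    let ?E = "dotminus h u"
    have slE: "{x. (n, x) \<in> the (?E n)} = (if n \<in> dom g then sl n - W n else sl n)"
      if n: "n \<in> dom ?E" for n
      using the_dotminus[OF n] theu by (auto simp: domu sl_def)
    have sub: "dom h - Ex M \<subseteq> dom ?E"
    proof
      fix n assume n: "n \<in> dom h - Ex M"
      show "n \<in> dom ?E"
      proof (cases "n \<in> dom g")
        case False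
        then show ?thesis using n domu by (simp add: dom_dotminus)
      next
        case True
        have "enat M < \<mu> (sl n - W n)" using big[of n M] n True by blast
        then have "sl n - W n \<noteq> {}" using mu0 by (metis leD)
        then obtain x where x: "(n, x) \<in> the (h n)" "x \<notin> W n" by (auto simp: sl_def)
        then have "\<not> the (h n) \<subseteq> the (u n)" using theu[OF True] by auto
        then show ?thesis using n by (simp add: dom_dotminus)
      qed
    qed
    have infh: "infinite (dom h)" using hE by (simp add: Eset_def)
    have infE: "infinite (dom ?E)"
      using sub infh finEx[of M] by (meson Diff_infinite_finite infinite_super)
    have EE: "?E \<in> Eset"
      unfolding Eset_def
    proof (intro CollectI conjI ballI)
      show "infinite (dom ?E)" by (rule infE)
    next
      fix n assume n: "n \<in> dom ?E"
      have d: "n \<in> dom h \<and> (n \<notin> dom u \<or> \<not> the (h n) \<subseteq> the (u n))" using n by (simp add: dom_dotminus)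
      have hs: "the (h n) \<noteq> {}" "the (h n) \<subseteq> Cn n" using hE d by (auto simp: Eset_def)
      show "the (?E n) \<noteq> {}" using the_dotminus[OF n] d hs by auto
      show "the (?E n) \<subseteq> Cn n" using the_dotminus[OF n] hs by auto
    qed
    have "finite {n \<in> dom ?E. mu_n \<mu> n (the (?E n)) \<le> enat K}" for K
    proof (rule finite_subset[OF _ finEx[of K]])
      show "{n \<in> dom ?E. mu_n \<mu> n (the (?E n)) \<le> enat K} \<subseteq> Ex K"
      proof
        fix n assume n: "n \<in> {n \<in> dom ?E. mu_n \<mu> n (the (?E n)) \<le> enat K}"
        then have nE: "n \<in> dom ?E" and le: "\<mu> {x. (n, x) \<in> the (?E n)} \<le> enat K"
          by (auto simp: mu_n_def)
        have nh: "n \<in> dom h" using nE by (simp add: dom_dotminus)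
        show "n \<in> Ex K"
        proof (rule ccontr)
          assume "n \<notin> Ex K"
          then have bg: "enat K < \<mu> (sl n) \<and> (n \<in> dom g \<longrightarrow> enat K < \<mu> (sl n - W n))"
            using big nh by blast
          show False using le bg slE[OF nE] by (auto split: if_splits)
        qed
      qed
    qed
    then show ?thesis using EE by (simp add: Hset_def)
  qed
  then show "\<exists>u\<in>Oset. sqsub g u \<and> (\<forall>h\<in>HH. dotminus h u \<in> Hset \<mu>)"
    using uO sq by blast
qed


theorem theorem2p5:
  fixes M :: nat and \<mu> :: "cantor set \<Rightarrow> enat"
  assumes mono: "\<And>A B. A \<subseteq> B \<Longrightarrow> \<mu> A \<le> \<mu> B"
    and subadd: "\<And>A B. \<mu> (A \<union> B) \<le> \<mu> A + \<mu> B"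
    and i: "\<And>U. U \<noteq> {} \<Longrightarrow> clopen_in cantor_top U \<Longrightarrow> \<mu> U = \<infinity>"
    and ii: "\<And>a b. \<mu> a \<le> enat M \<Longrightarrow> enat M < \<mu> b \<Longrightarrow>
       (SUP U\<in>{U. a \<subseteq> U \<and> clopen_in cantor_top U}. \<mu> (b - U) + enat M) \<ge> \<mu> b"
  shows "dense_fam (Hset \<mu>) \<and> shrinkable (Hset \<mu>) \<and> large (Gset \<mu> M) (Hset \<mu>)"
  using dense_part[of \<mu>, OF i] shrink_part[where \<mu>=\<mu>, OF mono subadd]
    large_part[where \<mu>=\<mu> and M=M, OF mono ii] by blast

end
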